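(* The ideals $I_2(\mathbf T_{\lambda-\mu})$ and $I_2(\mathbf S_{\lambda-\mu})$ are prime ideals of $K[\mathbf T_{\lambda-\mu}]$.
   Context: Let $K$ be a field. Fix an integer $n\ge1$, a partition $\lambda=(\lambda_1,\dots,\lambda_n)$ of positive integers with $m:=\lambda_1\ge\lambda_2\ge\cdots\ge\lambda_n$, and an integer vector $\mu=(\mu_1,\dots,\mu_n)$ with $0\le\mu_1\le\cdots\le\mu_n<\lambda_n$ and $\mu_i\ge i-1$ for all $i$. The tableau $\mathbf T_{\lambda-\mu}$ is the set of positions $\{(i,j):1\le i\le n,\ \mu_i<j\le\lambda_i\}$ in an $m\times m$ array, and $K[\mathbf T_{\lambda-\mu}]$ is the polynomial ring over $K$ in the variables $T_{ij}$, $(i,j)\in\mathbf T_{\lambda-\mu}$; the entry of $\mathbf T_{\lambda-\mu}$ at $(i,j)$ is $T_{ij}$. The symmetrized tableau $\mathbf S_{\lambda-\mu}$ is the partially filled $m\times m$ array with set of positions $\{(i,j):(i,j)\in\mathbf T_{\lambda-\mu}\text{ or }(j,i)\in\mathbf T_{\lambda-\mu}\}$, whose entry at $(i,j)$ is $T_{ij}$ if $(i,j)\in\mathbf T_{\lambda-\mu}$ and $T_{ji}$ otherwise. For such an array $A$ with set of positions $P$ and entries $a_{ij}$, a 2-minor of $A$ is a polynomial $a_{ij}a_{kl}-a_{il}a_{kj}$ with $i<k$, $j<l$ and $(i,j),(i,l),(k,j),(k,l)\in P$. $I_2(\mathbf T_{\lambda-\mu})$ and $I_2(\mathbf S_{\lambda-\mu})$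 denote the ideals of $K[\mathbf T_{\lambda-\mu}]$ generated by the 2-minors of $\mathbf T_{\lambda-\mu}$ and of $\mathbf S_{\lambda-\mu}$. *)

theory Defs
  imports "HOL-Library.Poly_Mapping"
begin

text \<open>Multivariate polynomials over a field 'k in variables indexed by positions (i,j) :: nat \<times> nat,
  represented as finitely supported maps from monomials (finitely supported exponent vectors)
  to coefficients; multiplication is convolution.\<close>

type_synonym 'k mpoly = "((nat \<times> nat) \<Rightarrow>\<^sub>0 nat) \<Rightarrow>\<^sub>0 'k"

definition Var :: "nat \<times> nat \<Rightarrow> 'k::comm_ring_1 mpoly" where
  "Var p = Poly_Mapping.single (Poly_Mapping.single p 1) 1"

definition poly_ring :: "(nat \<times> nat) set \<Rightarrow> 'k::comm_ring_1 mpoly set" where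
  "poly_ring V = {p :: 'k mpoly. \<forall>m \<in> Poly_Mapping.keys p. Poly_Mapping.keys m \<subseteq> V}"

definition ideal_gen :: "'a::comm_ring_1 set \<Rightarrow> 'a set \<Rightarrow> 'a set" where
  "ideal_gen R G = {x. \<exists>F c. finite F \<and> F \<subseteq> G \<and> (\<forall>g\<in>F. c g \<in> R) \<and> x = (\<Sum>g\<in>F. c g * g)}"

definition prime_ideal_in :: "'a::comm_ring_1 set \<Rightarrow> 'a set \<Rightarrow> bool" where
  "prime_ideal_in R I \<longleftrightarrow> I \<subseteq> R \<and> 0 \<in> I \<and>
     (\<forall>a\<in>I. \<forall>b\<in>I. a + b \<in> I) \<and> (\<forall>r\<in>R. \<forall>a\<in>I. r * a \<in> I) \<and>
     I \<noteq> R \<and> (\<forall>a\<in>R. \<forall>b\<in>R. a * b \<in> I \<longrightarrow> a \<in> I \<or> b \<in> I)"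

definition tab_pos :: "nat \<Rightarrow> (nat \<Rightarrow> nat) \<Rightarrow> (nat \<Rightarrow> nat) \<Rightarrow> (nat \<times> nat) set" where
  "tab_pos n lam mu = {(i, j). 1 \<le> i \<and> i \<le> n \<and> mu i < j \<and> j \<le> lam i}"

definition sym_pos :: "nat \<Rightarrow> (nat \<Rightarrow> nat) \<Rightarrow> (nat \<Rightarrow> nat) \<Rightarrow> (nat \<times> nat) set" where
  "sym_pos n lam mu = {(i, j). (i, j) \<in> tab_pos n lam mu \<or> (j, i) \<in> tab_pos n lam mu}"

definition tab_entry :: "nat \<times> nat \<Rightarrow> 'k::comm_ring_1 mpoly" where
  "tab_entry p = Var p"

definition sym_entry :: "nat \<Rightarrow> (nat \<Rightarrow> nat) \<Rightarrow> (nat \<Rightarrow> nat) \<Rightarrow> nat \<times> nat \<Rightarrow> 'k::comm_ring_1 mpoly" where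
  "sym_entry n lam mu p = (if p \<in> tab_pos n lam mu then Var p else Var (snd p, fst p))"

definition two_minors :: "(nat \<times> nat) set \<Rightarrow> (nat \<times> nat \<Rightarrow> 'a::comm_ring_1) \<Rightarrow> 'a set" where
  "two_minors P a = {a (i, j) * a (k, l) - a (i, l) * a (k, j) | i j k l.
      i < k \<and> j < l \<and> (i, j) \<in> P \<and> (i, l) \<in> P \<and> (k, j) \<in> P \<and> (k, l) \<in> P}"

end

theory Submission
  imports Defs "HOL-Library.Product_Lexorder"
begin


type_synonym mono = "(nat \<times> nat) \<Rightarrow>\<^sub>0 nat"

definition push :: "(mono \<Rightarrow> mono) \<Rightarrow> 'k::comm_ring_1 mpoly \<Rightarrow> 'k mpoly" where
  "push \<psi> p = (\<Sum>m\<in>Poly_Mapping.keys p. Poly_Mapping.single (\<psi> m) (Poly_Mapping.lookup p m))"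

lemma push_superset:
  assumes "finite A" "Poly_Mapping.keys p \<subseteq> A"
  shows "push \<psi> p = (\<Sum>m\<in>A. Poly_Mapping.single (\<psi> m) (Poly_Mapping.lookup p m))"
  unfolding push_def
  by (rule sum.mono_neutral_left) (use assms in \<open>auto simp: in_keys_iff\<close>)

lemma push_add: "push \<psi> (p + q) = push \<psi> p + push \<psi> q"
proof -
  let ?A = "Poly_Mapping.keys p \<union> Poly_Mapping.keys q"
  have "push \<psi> (p + q) = (\<Sum>m\<in>?A. Poly_Mapping.single (\<psi> m) (Poly_Mapping.lookup (p+q) m))"
    by (rule push_superset) (auto dest: set_mp[OF keys_add])
  also have "\<dots> = (\<Sum>m\<in>?A. Poly_Mapping.single (\<psi> m) (Poly_Mapping.lookup p m))
     + (\<Sum>m\<in>?A. Poly_Mapping.single (\<psi> m) (Poly_Mapping.lookup q m))"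
    by (simp add: lookup_add single_add sum.distrib)
  also have "\<dots> = push \<psi> p + push \<psi> q"
    using push_superset[of ?A p \<psi>] push_superset[of ?A q \<psi>] by simp
  finally show ?thesis .
qed

lemma push_zero [simp]: "push \<psi> 0 = 0"
  by (simp add: push_def)

lemma push_single [simp]: "push \<psi> (Poly_Mapping.single a c) = Poly_Mapping.single (\<psi> a) c"
  by (simp add: push_def)

lemma push_sum: "push \<psi> (\<Sum>i\<in>I. f i) = (\<Sum>i\<in>I. push \<psi> (f i))"
  by (induction I rule: infinite_finite_induct) (auto simp: push_add)

lemma push_uminus: "push \<psi> (- p) = - push \<psi> p"
  by (metis add_eq_0_iff2 push_add push_zero add.right_inverse)

lemma push_diff: "push \<psi> (p - q) = push \<psi> p - push \<psi> q"
  by (metis diff_conv_add_uminus push_add push_uminus)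

lemma poly_expand: "p = (\<Sum>m\<in>Poly_Mapping.keys p. Poly_Mapping.single m (Poly_Mapping.lookup p m))"
  by (rule poly_mapping_eqI)
     (simp add: lookup_sum lookup_single when_def in_keys_iff sum.delta' cong: if_cong)

lemma push_mult:
  assumes hom: "\<And>a b. \<psi> (a + b) = \<psi> a + \<psi> b"
  shows "push \<psi> (p * q) = push \<psi> p * push \<psi> (q :: 'k::comm_ring_1 mpoly)"
proof -
  let ?P = "Poly_Mapping.keys p" and ?Q = "Poly_Mapping.keys q"
  have "p * q = (\<Sum>a\<in>?P. Poly_Mapping.single a (Poly_Mapping.lookup p a)) *
                (\<Sum>b\<in>?Q. Poly_Mapping.single b (Poly_Mapping.lookup q b))"
    using poly_expand[of p] poly_expand[of q] by simp
  also have "\<dots> = (\<Sum>a\<in>?P. \<Sum>b\<in>?Q. Poly_Mapping.single (a+b) (Poly_Mapping.lookup p a * Poly_Mapping.lookup q b))"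
    apply (simp add: sum_distrib_left sum_distrib_right mult_single)
    apply (subst sum.swap) apply simp done
  finally have "push \<psi> (p*q) = (\<Sum>a\<in>?P. \<Sum>b\<in>?Q. Poly_Mapping.single (\<psi> a + \<psi> b) (Poly_Mapping.lookup p a * Poly_Mapping.lookup q b))"
    by (simp add: push_sum hom)
  also have "\<dots> = (\<Sum>a\<in>?P. Poly_Mapping.single (\<psi> a) (Poly_Mapping.lookup p a)) *
                (\<Sum>b\<in>?Q. Poly_Mapping.single (\<psi> b) (Poly_Mapping.lookup q b))"
    apply (simp add: sum_distrib_left sum_distrib_right mult_single)
    apply (subst sum.swap) apply simp done
  also have "\<dots> = push \<psi> p * push \<psi> q" by (simp add: push_def)
  finally show ?thesis .
qed

lemma lookup_push: "Poly_Mapping.lookup (push \<psi> p) M =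
   (\<Sum>m\<in>{m\<in>Poly_Mapping.keys p. \<psi> m = M}. Poly_Mapping.lookup p m)"
  unfolding push_def lookup_sum lookup_single when_def
  by (simp add: sum.inter_filter)


lemma keys_mono_add: "Poly_Mapping.keys ((a::mono) + b) = Poly_Mapping.keys a \<union> Poly_Mapping.keys b"
  by (auto simp: in_keys_iff lookup_add)

lemma pr_zero [simp]: "0 \<in> poly_ring V"
  by (simp add: poly_ring_def)

lemma pr_single: "Poly_Mapping.keys m \<subseteq> V \<Longrightarrow> Poly_Mapping.single m c \<in> poly_ring V"
  by (auto simp: poly_ring_def)

lemma pr_const: "Poly_Mapping.single 0 c \<in> poly_ring V"
  by (rule pr_single) simp

lemma pr_one [simp]: "1 \<in> poly_ring V"
  by (auto simp: poly_ring_def keys_one)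

lemma pr_iff: "p \<in> poly_ring V \<longleftrightarrow> (\<forall>m\<in>Poly_Mapping.keys p. Poly_Mapping.keys m \<subseteq> V)"
  by (simp add: poly_ring_def)

lemma pr_add:
  assumes "p \<in> poly_ring V" "q \<in> poly_ring V" shows "p + q \<in> poly_ring V"
  unfolding pr_iff
proof
  fix m assume "m \<in> Poly_Mapping.keys (p + q)"
  then have "m \<in> Poly_Mapping.keys p \<or> m \<in> Poly_Mapping.keys q" using keys_add[of p q] by blast
  then show "Poly_Mapping.keys m \<subseteq> V" using assms unfolding pr_iff by blast
qed

lemma pr_uminus: "p \<in> poly_ring V \<Longrightarrow> - p \<in> poly_ring V"
  unfolding pr_iff by simp

lemma pr_diff: "p \<in> poly_ring V \<Longrightarrow> q \<in> poly_ring V \<Longrightarrow> p - q \<in> poly_ring V"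
  by (metis diff_conv_add_uminus pr_add pr_uminus)

lemma pr_mult:
  assumes "p \<in> poly_ring V" "q \<in> poly_ring V" shows "p * q \<in> poly_ring V"
  unfolding pr_iff
proof
  fix m assume m: "m \<in> Poly_Mapping.keys (p * q)"
  obtain a b where ab: "m = a + b" "a \<in> Poly_Mapping.keys p" "b \<in> Poly_Mapping.keys q"
    using keys_mult[of p q] m by blast
  have "Poly_Mapping.keys a \<subseteq> V" "Poly_Mapping.keys b \<subseteq> V"
    using assms ab unfolding pr_iff by blast+
  then show "Poly_Mapping.keys m \<subseteq> V" by (simp add: ab keys_mono_add)
qed

lemma pr_sum: "(\<And>i. i \<in> I \<Longrightarrow> f i \<in> poly_ring V) \<Longrightarrow> (\<Sum>i\<in>I. f i) \<in> poly_ring V"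
  by (induction I rule: infinite_finite_induct) (auto intro: pr_add)

lemma ig_zero: "0 \<in> ideal_gen R G"
  unfolding ideal_gen_def by (rule CollectI, rule exI[of _ "{}"]) auto

lemma ig_gen: "1 \<in> R \<Longrightarrow> g \<in> G \<Longrightarrow> g \<in> ideal_gen R G"
  unfolding ideal_gen_def by (rule CollectI, rule exI[of _ "{g}"], rule exI[of _ "\<lambda>_. 1"]) auto

lemma ig_add:
  assumes R0: "0 \<in> R" and Radd: "\<And>a b. a \<in> R \<Longrightarrow> b \<in> R \<Longrightarrow> a + b \<in> R"
    and x: "x \<in> ideal_gen R G" and y: "y \<in> ideal_gen R G"
  shows "x + y \<in> ideal_gen R G"
proof -
  obtain F1 c1 where 1: "finite F1" "F1 \<subseteq> G" "\<forall>g\<in>F1. c1 g \<in> R" "x = (\<Sum>g\<in>F1. c1 g * g)"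
    using x unfolding ideal_gen_def by blast
  obtain F2 c2 where 2: "finite F2" "F2 \<subseteq> G" "\<forall>g\<in>F2. c2 g \<in> R" "y = (\<Sum>g\<in>F2. c2 g * g)"
    using y unfolding ideal_gen_def by blast
  define c where "c g = (if g \<in> F1 then c1 g else 0) + (if g \<in> F2 then c2 g else 0)" for g
  have "(\<Sum>g\<in>F1 \<union> F2. c g * g) = (\<Sum>g\<in>F1 \<union> F2. (if g \<in> F1 then c1 g * g else 0))
      + (\<Sum>g\<in>F1 \<union> F2. (if g \<in> F2 then c2 g * g else 0))"
    unfolding sum.distrib[symmetric] by (rule sum.cong) (auto simp: c_def distrib_right)
  also have "\<dots> = x + y"
    using 1 2 by (simp add: sum.If_cases Int_absorb1 Int_absorb2)
  finally have "x + y = (\<Sum>g\<in>F1 \<union> F2. c g * g)" by simp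
  moreover have "\<forall>g\<in>F1 \<union> F2. c g \<in> R"
    using 1 2 R0 Radd unfolding c_def by simp
  ultimately show ?thesis
    unfolding ideal_gen_def
    by (intro CollectI exI[of _ "F1 \<union> F2"] exI[of _ c]) (use 1 2 in auto)
qed

lemma ig_mult:
  assumes Rmult: "\<And>a b. a \<in> R \<Longrightarrow> b \<in> R \<Longrightarrow> a * b \<in> R"
    and r: "r \<in> R" and x: "x \<in> ideal_gen R G"
  shows "r * x \<in> ideal_gen R G"
proof -
  obtain F1 c1 where 1: "finite F1" "F1 \<subseteq> G" "\<forall>g\<in>F1. c1 g \<in> R" "x = (\<Sum>g\<in>F1. c1 g * g)"
    using x unfolding ideal_gen_def by blast
  have "r * x = (\<Sum>g\<in>F1. (r * c1 g) * g)"
    using 1 by (simp add: sum_distrib_left mult.assoc)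
  then show ?thesis
    unfolding ideal_gen_def
    by (intro CollectI exI[of _ F1] exI[of _ "\<lambda>g. r * c1 g"]) (use 1 Rmult r in auto)
qed

lemma ig_subset:
  assumes "G \<subseteq> poly_ring V"
  shows "ideal_gen (poly_ring V) G \<subseteq> poly_ring V"
  using assms unfolding ideal_gen_def by (auto intro!: pr_sum pr_mult)

abbreviation mon :: "mono \<Rightarrow> 'k::comm_ring_1 mpoly" where
  "mon m \<equiv> Poly_Mapping.single m 1"

lemma kernel_sub_ideal:
  fixes G :: "'k::comm_ring_1 mpoly set"
  assumes conn: "\<And>m m'. Poly_Mapping.keys m \<subseteq> V \<Longrightarrow> Poly_Mapping.keys m' \<subseteq> V \<Longrightarrow> \<psi> m = \<psi> m'
       \<Longrightarrow> mon m - mon m' \<in> ideal_gen (poly_ring V) G"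
  shows "f \<in> poly_ring V \<Longrightarrow> push \<psi> f = 0 \<Longrightarrow> f \<in> ideal_gen (poly_ring V) G"
proof (induction "card (Poly_Mapping.keys f)" arbitrary: f rule: less_induct)
  case less
  let ?R = "poly_ring V :: 'k mpoly set"
  have Radd: "\<And>a b. a \<in> ?R \<Longrightarrow> b \<in> ?R \<Longrightarrow> a + b \<in> ?R" by (rule pr_add)
  have Rmult: "\<And>a b. a \<in> ?R \<Longrightarrow> b \<in> ?R \<Longrightarrow> a * b \<in> ?R" by (rule pr_mult)
  show ?case
  proof (cases "f = 0")
    case True then show ?thesis by (simp add: ig_zero)
  next
    case False
    then obtain m where m: "m \<in> Poly_Mapping.keys f" by (metis all_not_in_conv keys_eq_empty)
    define c where "c = Poly_Mapping.lookup f m"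
    have c0: "c \<noteq> 0" using m by (simp add: c_def in_keys_iff)
    have "\<exists>m'\<in>Poly_Mapping.keys f. m' \<noteq> m \<and> \<psi> m' = \<psi> m"
    proof (rule ccontr)
      assume "\<not> ?thesis"
      then have "{u\<in>Poly_Mapping.keys f. \<psi> u = \<psi> m} = {m}" using m by auto
      then have "Poly_Mapping.lookup (push \<psi> f) (\<psi> m) = c" by (simp add: lookup_push c_def)
      with less.prems c0 show False by simp
    qed
    then obtain m' where m': "m' \<in> Poly_Mapping.keys f" "m' \<noteq> m" "\<psi> m' = \<psi> m" by blast
    define f' where "f' = f - Poly_Mapping.single m c + Poly_Mapping.single m' c"
    have keysf': "Poly_Mapping.keys f' \<subseteq> Poly_Mapping.keys f - {m}"
    proof
      fix u assume u: "u \<in> Poly_Mapping.keys f'"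
      show "u \<in> Poly_Mapping.keys f - {m}"
        using u m' unfolding f'_def
        by (auto simp: in_keys_iff lookup_add lookup_minus lookup_single when_def c_def split: if_splits)
    qed
    have Vm: "Poly_Mapping.keys m \<subseteq> V" "Poly_Mapping.keys m' \<subseteq> V"
      using less.prems(1) m m' unfolding poly_ring_def by auto
    have f'R: "f' \<in> ?R" unfolding f'_def
      using less.prems(1) Vm by (intro pr_add pr_diff pr_single) auto
    have "push \<psi> f' = 0"
      unfolding f'_def by (simp add: push_add push_diff less.prems m')
    have lt: "card (Poly_Mapping.keys f') < card (Poly_Mapping.keys f)"
      by (rule psubset_card_mono) (use keysf' m in auto)
    have f'I: "f' \<in> ideal_gen ?R G"
      using less.hyps[OF lt f'R \<open>push \<psi> f' = 0\<close>] .
    have "Poly_Mapping.single 0 c * (mon m - mon m') \<in> ideal_gen ?R G"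
      by (rule ig_mult[OF Rmult pr_const conn[OF Vm m'(3)[symmetric]]])
    moreover have "f = f' + Poly_Mapping.single 0 c * (mon m - mon m')"
      unfolding f'_def by (simp add: right_diff_distrib mult_single)
    ultimately show ?thesis
      using ig_add[OF pr_zero Radd f'I] by simp
  qed
qed

lemma kernel_char:
  fixes G :: "'k::comm_ring_1 mpoly set"
  assumes hom: "\<And>a b. \<psi> (a + b) = \<psi> a + \<psi> b"
    and GR: "G \<subseteq> poly_ring V" and Gk: "\<And>g. g \<in> G \<Longrightarrow> push \<psi> g = 0"
    and conn: "\<And>m m'. Poly_Mapping.keys m \<subseteq> V \<Longrightarrow> Poly_Mapping.keys m' \<subseteq> V \<Longrightarrow> \<psi> m = \<psi> m'
       \<Longrightarrow> mon m - mon m' \<in> ideal_gen (poly_ring V) G"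
  shows "ideal_gen (poly_ring V) G = {f \<in> poly_ring V. push \<psi> f = 0}"
proof
  show "{f \<in> poly_ring V. push \<psi> f = 0} \<subseteq> ideal_gen (poly_ring V) G"
    using kernel_sub_ideal[OF conn] by blast
  show "ideal_gen (poly_ring V) G \<subseteq> {f \<in> poly_ring V. push \<psi> f = 0}"
  proof
    fix x assume x: "x \<in> ideal_gen (poly_ring V) G"
    then obtain F c where F: "finite F" "F \<subseteq> G" "x = (\<Sum>g\<in>F. c g * g)"
      unfolding ideal_gen_def by blast
    have z: "\<forall>g\<in>F. push \<psi> (c g) * push \<psi> g = 0" using F Gk by auto
    have "push \<psi> x = (\<Sum>g\<in>F. push \<psi> (c g) * push \<psi> g)"
      unfolding F(3) push_sum push_mult[OF hom] ..
    also have "\<dots> = 0" using z by simp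
    finally have "push \<psi> x = 0" .
    moreover have "x \<in> poly_ring V" using ig_subset[OF GR] x by blast
    ultimately show "x \<in> {f \<in> poly_ring V. push \<psi> f = 0}" by simp
  qed
qed

lemma kernel_prime:
  assumes hom: "\<And>a b. \<psi> (a + b) = \<psi> a + \<psi> b"
  shows "prime_ideal_in (poly_ring V :: 'k::field mpoly set) {f \<in> poly_ring V. push \<psi> f = 0}"
proof -
  have psi0: "\<psi> 0 = 0" using hom[of 0 0] by simp
  have p1: "push \<psi> (1 :: 'k mpoly) = 1"
  proof -
    have "push \<psi> (1 :: 'k mpoly) = push \<psi> (Poly_Mapping.single 0 1)" by simp
    also have "\<dots> = Poly_Mapping.single (\<psi> 0) 1" by (rule push_single)
    also have "\<dots> = 1" using psi0 by simp
    finally show ?thesis .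
  qed
  let ?K = "{f \<in> poly_ring V. push \<psi> f = 0} :: 'k mpoly set"
  show ?thesis
    unfolding prime_ideal_in_def
  proof (intro conjI ballI impI)
    show "?K \<subseteq> poly_ring V" by blast
    show "0 \<in> ?K" by simp
  next
    fix a b :: "'k mpoly" assume "a \<in> ?K" "b \<in> ?K" then show "a + b \<in> ?K" by (simp add: push_add pr_add)
  next
    fix r a :: "'k mpoly" assume "r \<in> poly_ring V" "a \<in> ?K" then show "r * a \<in> ?K"
      by (simp add: push_mult[OF hom] pr_mult)
  next
    show "?K \<noteq> poly_ring V"
    proof
      assume "?K = poly_ring V"
      then have "(1::'k mpoly) \<in> ?K" using pr_one by blast
      then show False using p1 by simp
    qed
  next
    fix a b :: "'k mpoly" assume ab: "a \<in> poly_ring V" "b \<in> poly_ring V" "a * b \<in> ?K"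
    then have "push \<psi> a * push \<psi> b = 0" by (simp add: push_mult[OF hom])
    then show "a \<in> ?K \<or> b \<in> ?K" using ab by simp
  qed
qed




abbreviation e :: "nat \<times> nat \<Rightarrow> mono" where "e v \<equiv> Poly_Mapping.single v 1"

definition L :: "(nat \<times> nat \<Rightarrow> nat) \<Rightarrow> mono \<Rightarrow> nat" where
  "L h m = (\<Sum>v\<in>Poly_Mapping.keys m. Poly_Mapping.lookup m v * h v)"

lemma L_superset:
  assumes "finite A" "Poly_Mapping.keys m \<subseteq> A"
  shows "L h m = (\<Sum>v\<in>A. Poly_Mapping.lookup m v * h v)"
  unfolding L_def
  by (rule sum.mono_neutral_left) (use assms in \<open>auto simp: in_keys_iff\<close>)

lemma L_add: "L h (a + b) = L h a + L h b"
proof -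
  let ?A = "Poly_Mapping.keys a \<union> Poly_Mapping.keys b"
  have "L h (a + b) = (\<Sum>v\<in>?A. Poly_Mapping.lookup (a+b) v * h v)"
    by (rule L_superset) (auto simp: keys_mono_add)
  also have "\<dots> = (\<Sum>v\<in>?A. Poly_Mapping.lookup a v * h v) + (\<Sum>v\<in>?A. Poly_Mapping.lookup b v * h v)"
    by (simp add: lookup_add sum.distrib distrib_right)
  also have "\<dots> = L h a + L h b"
    using L_superset[of ?A a h] L_superset[of ?A b h] by simp
  finally show ?thesis .
qed

lemma L_zero [simp]: "L h 0 = 0" by (simp add: L_def)

lemma L_e [simp]: "L h (e v) = h v" by (simp add: L_def)

lemma L_pos: "L h m > 0 \<Longrightarrow> \<exists>v\<in>Poly_Mapping.keys m. h v > 0"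
  unfolding L_def by (metis (no_types, lifting) mult_0_right neq0_conv sum.neutral)

lemma L_ge: "v \<in> Poly_Mapping.keys m \<Longrightarrow> Poly_Mapping.lookup m v * h v \<le> L h m"
  unfolding L_def by (rule member_le_sum) auto

lemma L_cong: "(\<And>v. v \<in> Poly_Mapping.keys m \<Longrightarrow> h v = h' v) \<Longrightarrow> L h m = L h' m"
  unfolding L_def by (rule sum.cong) auto

lemma L_mono: "(\<And>v. v \<in> Poly_Mapping.keys m \<Longrightarrow> h v \<le> h' v) \<Longrightarrow> L h m \<le> L h' m"
  unfolding L_def by (rule sum_mono) auto

lemma L_plus_fun: "L (\<lambda>v. h v + h' v) m = L h m + L h' m"
  unfolding L_def by (simp add: distrib_left sum.distrib)

definition lin :: "(nat \<times> nat \<Rightarrow> mono) \<Rightarrow> mono \<Rightarrow> mono" where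
  "lin f m = (\<Sum>v\<in>Poly_Mapping.keys m. Poly_Mapping.map ((*) (Poly_Mapping.lookup m v)) (f v))"

lemma lookup_map_mult: "Poly_Mapping.lookup (Poly_Mapping.map ((*) (c::nat)) p) k = c * Poly_Mapping.lookup p k"
  by (simp add: Poly_Mapping.map.rep_eq when_def)

lemma lookup_lin: "Poly_Mapping.lookup (lin f m) k = L (\<lambda>v. Poly_Mapping.lookup (f v) k) m"
  unfolding lin_def L_def lookup_sum lookup_map_mult by simp

lemma lin_add: "lin f (a + b) = lin f a + lin f b"
  by (rule poly_mapping_eqI) (simp add: lookup_lin lookup_add L_add)

lemma split_key: "v \<in> Poly_Mapping.keys m \<Longrightarrow> m = (m - e v) + e v"
  by (rule poly_mapping_eqI) (auto simp: lookup_add lookup_minus lookup_single when_def in_keys_iff)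

lemma keys_minus_sub: "Poly_Mapping.keys ((m::mono) - x) \<subseteq> Poly_Mapping.keys m"
  by (auto simp: in_keys_iff lookup_minus)

definition conn :: "(nat \<times> nat) set \<Rightarrow> 'k::comm_ring_1 mpoly set \<Rightarrow> mono \<Rightarrow> mono \<Rightarrow> bool" where
  "conn V G a b \<longleftrightarrow> (mon a - mon b :: 'k mpoly) \<in> ideal_gen (poly_ring V) G"

lemma conn_refl: "conn V G a a"
  by (simp add: conn_def ig_zero)

lemma conn_trans: "conn V G a b \<Longrightarrow> conn V G b c \<Longrightarrow> conn V G a c"
  unfolding conn_def using ig_add[OF pr_zero pr_add] by fastforce

lemma conn_sym:
  assumes "conn V (G::'k::comm_ring_1 mpoly set) a b" shows "conn V G b a"
proof -
  have "(-1) * (mon a - mon b :: 'k mpoly) \<in> ideal_gen (poly_ring V) G"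
    using assms unfolding conn_def
    by (intro ig_mult[OF pr_mult]) (auto intro: pr_uminus)
  then show ?thesis unfolding conn_def by simp
qed

lemma conn_add:
  assumes "conn V (G::'k::comm_ring_1 mpoly set) a b" "Poly_Mapping.keys r \<subseteq> V"
  shows "conn V G (r + a) (r + b)"
proof -
  have "(mon r :: 'k mpoly) * (mon a - mon b) \<in> ideal_gen (poly_ring V) G"
    using assms unfolding conn_def by (intro ig_mult[OF pr_mult] pr_single)
  then show ?thesis unfolding conn_def by (simp add: right_diff_distrib mult_single)
qed

lemma conn_gen:
  assumes "(mon a - mon b :: 'k::comm_ring_1 mpoly) \<in> G"
  shows "conn V G a b"
  using assms unfolding conn_def by (intro ig_gen) simp




definition rs :: "mono \<Rightarrow> nat \<Rightarrow> nat" where "rs m i = L (\<lambda>v. if fst v = i then 1 else 0) m"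
definition cs :: "mono \<Rightarrow> nat \<Rightarrow> nat" where "cs m j = L (\<lambda>v. if snd v = j then 1 else 0) m"
definition deg :: "mono \<Rightarrow> nat" where "deg m = L (\<lambda>v. 1) m"

lemma rs_add: "rs (a + b) i = rs a i + rs b i" by (simp add: rs_def L_add)
lemma cs_add: "cs (a + b) i = cs a i + cs b i" by (simp add: cs_def L_add)
lemma deg_add: "deg (a + b) = deg a + deg b" by (simp add: deg_def L_add)
lemma rs_e: "rs (e v) i = (if fst v = i then 1 else 0)" unfolding rs_def L_e ..
lemma cs_e: "cs (e v) i = (if snd v = i then 1 else 0)" unfolding cs_def L_e ..
lemma deg_e: "deg (e v) = 1" unfolding deg_def L_e ..
lemma rs_e1 [simp]: "rs (Poly_Mapping.single v (Suc 0)) i = (if fst v = i then 1 else 0)" using rs_e[of v i] by simp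
lemma cs_e1 [simp]: "cs (Poly_Mapping.single v (Suc 0)) i = (if snd v = i then 1 else 0)" using cs_e[of v i] by simp
lemma deg_e1 [simp]: "deg (Poly_Mapping.single v (Suc 0)) = 1" using deg_e[of v] by simp

lemma rs_pos: "v \<in> Poly_Mapping.keys m \<Longrightarrow> rs m (fst v) > 0"
proof -
  assume v: "v \<in> Poly_Mapping.keys m"
  have "Poly_Mapping.lookup m v * (if fst v = fst v then 1 else 0) \<le> rs m (fst v)"
    unfolding rs_def by (rule L_ge[OF v])
  then show ?thesis using v by (simp add: in_keys_iff)
qed

lemma cs_pos: "v \<in> Poly_Mapping.keys m \<Longrightarrow> cs m (snd v) > 0"
proof -
  assume v: "v \<in> Poly_Mapping.keys m"
  have "Poly_Mapping.lookup m v * (if snd v = snd v then 1 else 0) \<le> cs m (snd v)"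
    unfolding cs_def by (rule L_ge[OF v])
  then show ?thesis using v by (simp add: in_keys_iff)
qed

lemma rs_pos_ex: "rs m i > 0 \<Longrightarrow> \<exists>v\<in>Poly_Mapping.keys m. fst v = i"
  using L_pos[of "\<lambda>v. if fst v = i then 1 else 0" m] unfolding rs_def by (auto split: if_splits)

lemma cs_pos_ex: "cs m i > 0 \<Longrightarrow> \<exists>v\<in>Poly_Mapping.keys m. snd v = i"
  using L_pos[of "\<lambda>v. if snd v = i then 1 else 0" m] unfolding cs_def by (auto split: if_splits)

lemma deg_zero: "deg m = 0 \<Longrightarrow> m = 0"
proof (rule ccontr)
  assume "deg m = 0" "m \<noteq> 0"
  then obtain v where v: "v \<in> Poly_Mapping.keys m" by (metis all_not_in_conv keys_eq_empty)
  have "Poly_Mapping.lookup m v * 1 \<le> deg m" unfolding deg_def by (rule L_ge[OF v])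
  with v \<open>deg m = 0\<close> show False by (simp add: in_keys_iff)
qed

lemma split_two:
  assumes "v \<in> Poly_Mapping.keys m" "w \<in> Poly_Mapping.keys m" "v \<noteq> w"
  shows "m = (m - e v - e w) + (e v + e w)"
proof -
  have w: "w \<in> Poly_Mapping.keys (m - e v)"
    using assms by (simp add: in_keys_iff lookup_minus lookup_single)
  have "m = (m - e v) + e v" by (rule split_key[OF assms(1)])
  also have "m - e v = (m - e v - e w) + e w" by (rule split_key[OF w])
  finally show ?thesis by (simp add: ac_simps)
qed

lemma phaseA:
  fixes G :: "'k::comm_ring_1 mpoly set"
  assumes nest: "\<And>i k c. 1 \<le> i \<Longrightarrow> i < k \<Longrightarrow> (k,c) \<in> T \<Longrightarrow> (i,c) \<in> T"
    and T1: "\<And>v. v \<in> T \<Longrightarrow> 1 \<le> fst v"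
    and H: "\<And>i k c c'. 1 \<le> i \<Longrightarrow> i < k \<Longrightarrow> (k,c) \<in> T \<Longrightarrow> (k,c') \<in> T \<Longrightarrow> c < c' \<Longrightarrow>
           conn T G (e(i,c) + e(k,c')) (e(i,c') + e(k,c))"
  shows "deg m = d \<Longrightarrow> Poly_Mapping.keys m \<subseteq> T \<Longrightarrow> Poly_Mapping.keys m' \<subseteq> T \<Longrightarrow>
     (\<forall>i. rs m i = rs m' i) \<Longrightarrow> (\<forall>j. cs m j = cs m' j) \<Longrightarrow> conn T G m m'"
proof (induction d arbitrary: m m')
  case 0
  then have m0: "m = 0" by (simp add: deg_zero)
  have "m' = 0"
  proof (rule ccontr)
    assume "m' \<noteq> 0"
    then obtain v where v: "v \<in> Poly_Mapping.keys m'" by (metis all_not_in_conv keys_eq_empty)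
    have "rs m' (fst v) > 0" by (rule rs_pos[OF v])
    with 0 m0 show False by (simp add: rs_def)
  qed
  with m0 show ?case by (simp add: conn_refl)
next
  case (Suc d)
  have "m \<noteq> 0" using Suc.prems(1) by (auto simp: deg_def)
  then obtain v0 where v0: "v0 \<in> Poly_Mapping.keys m" by (metis all_not_in_conv keys_eq_empty)
  define k where "k = Max (fst ` Poly_Mapping.keys m)"
  have kin: "k \<in> fst ` Poly_Mapping.keys m" unfolding k_def using v0 by (intro Max_in) auto
  have kmax: "\<And>v. v \<in> Poly_Mapping.keys m \<Longrightarrow> fst v \<le> k" unfolding k_def by simp
  obtain c where kc: "(k,c) \<in> Poly_Mapping.keys m" using kin by force
  have "rs m' k > 0" using rs_pos[OF kc] Suc.prems(4) by simp
  then obtain c' where kc': "(k,c') \<in> Poly_Mapping.keys m'" using rs_pos_ex by force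
  have "cs m' c > 0" using cs_pos[OF kc] Suc.prems(5) by simp
  then obtain i where ic: "(i,c) \<in> Poly_Mapping.keys m'" using cs_pos_ex by force
  have "rs m i > 0" using rs_pos[OF ic] Suc.prems(4) by simp
  then have ik: "i \<le> k" using rs_pos_ex kmax by force
  have TkC: "(k,c) \<in> T" using kc Suc.prems(2) by blast
  have "\<exists>m''. (k,c) \<in> Poly_Mapping.keys m'' \<and> Poly_Mapping.keys m'' \<subseteq> T \<and> (\<forall>i. rs m'' i = rs m' i)
        \<and> (\<forall>j. cs m'' j = cs m' j) \<and> conn T G m' m''"
  proof (cases "i = k \<or> c = c'")
    case True
    then have "(k,c) \<in> Poly_Mapping.keys m'" using ic kc' by auto
    then show ?thesis using Suc.prems(3) conn_refl by blast
  next
    case False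
    then have ik': "i < k" and cc: "c \<noteq> c'" using ik by auto
    have Tic: "(i,c) \<in> T" and Tkc': "(k,c') \<in> T" using ic kc' Suc.prems(3) by blast+
    have i1: "1 \<le> i" using T1[OF Tic] by simp
    have Tic': "(i,c') \<in> T" by (rule nest[OF i1 ik' Tkc'])
    define r where "r = m' - e (i,c) - e (k,c')"
    have m'split: "m' = r + (e (i,c) + e (k,c'))"
      unfolding r_def by (rule split_two[OF ic kc']) (use ik' in auto)
    have keysr: "Poly_Mapping.keys r \<subseteq> T"
      using Suc.prems(3) keys_minus_sub unfolding r_def by blast
    define m'' where "m'' = r + (e (i,c') + e (k,c))"
    have base: "conn T G (e(i,c) + e(k,c')) (e(i,c') + e(k,c))"
    proof (cases "c < c'")
      case True then show ?thesis using H[OF i1 ik' TkC Tkc'] by simp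
    next
      case False
      then have "c' < c" using cc by simp
      then show ?thesis using H[OF i1 ik' Tkc' TkC] conn_sym by blast
    qed
    have "conn T G m' m''"
      unfolding m''_def using conn_add[OF base keysr] m'split by simp
    moreover have "(k,c) \<in> Poly_Mapping.keys m''"
      unfolding m''_def by (simp add: in_keys_iff lookup_add)
    moreover have "Poly_Mapping.keys m'' \<subseteq> T"
      unfolding m''_def using keysr Tic' TkC by (auto simp: keys_mono_add)
    moreover have "\<forall>x. rs m'' x = rs m' x"
    proof
      fix x
      have "rs m'' x = rs r x + (rs (e(i,c')) x + rs (e(k,c)) x)" by (simp only: m''_def rs_add)
      moreover have "rs m' x = rs r x + (rs (e(i,c)) x + rs (e(k,c')) x)"
        by (subst m'split) (simp only: rs_add)
      ultimately show "rs m'' x = rs m' x" unfolding rs_e by simp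
    qed
    moreover have "\<forall>x. cs m'' x = cs m' x"
    proof
      fix x
      have "cs m'' x = cs r x + (cs (e(i,c')) x + cs (e(k,c)) x)" by (simp only: m''_def cs_add)
      moreover have "cs m' x = cs r x + (cs (e(i,c)) x + cs (e(k,c')) x)"
        by (subst m'split) (simp only: cs_add)
      ultimately show "cs m'' x = cs m' x" unfolding cs_e by simp
    qed
    ultimately show ?thesis by blast
  qed
  then obtain m'' where m'': "(k,c) \<in> Poly_Mapping.keys m''" "Poly_Mapping.keys m'' \<subseteq> T"
    "\<forall>i. rs m'' i = rs m' i" "\<forall>j. cs m'' j = cs m' j" "conn T G m' m''" by blast
  define m0 where "m0 = m - e (k,c)"
  define m0'' where "m0'' = m'' - e (k,c)"
  have ms: "m = m0 + e (k,c)" unfolding m0_def by (rule split_key[OF kc])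
  have ms'': "m'' = m0'' + e (k,c)" unfolding m0''_def by (rule split_key[OF m''(1)])
  have "deg m = deg m0 + deg (e (k,c))" using ms deg_add by metis
  then have "deg m0 = d" using Suc.prems(1) by (simp add: deg_e)
  moreover have "Poly_Mapping.keys m0 \<subseteq> T" using Suc.prems(2) keys_minus_sub unfolding m0_def by blast
  moreover have "Poly_Mapping.keys m0'' \<subseteq> T" using m''(2) keys_minus_sub unfolding m0''_def by blast
  moreover have "\<forall>i. rs m0 i = rs m0'' i"
  proof
    fix x
    have "rs m x = rs m0 x + rs (e (k,c)) x" "rs m'' x = rs m0'' x + rs (e (k,c)) x"
      by (subst ms, rule rs_add) (subst ms'', rule rs_add)
    then show "rs m0 x = rs m0'' x" using Suc.prems(4) m''(3) by simp
  qed
  moreover have "\<forall>i. cs m0 i = cs m0'' i"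
  proof
    fix x
    have "cs m x = cs m0 x + cs (e (k,c)) x" "cs m'' x = cs m0'' x + cs (e (k,c)) x"
      by (subst ms, rule cs_add) (subst ms'', rule cs_add)
    then show "cs m0 x = cs m0'' x" using Suc.prems(5) m''(4) by simp
  qed
  ultimately have "conn T G m0 m0''" using Suc.IH by blast
  then have "conn T G (e (k,c) + m0) (e (k,c) + m0'')"
    by (rule conn_add) (use TkC in simp)
  then have "conn T G m m''" using ms ms'' by (simp add: add.commute)
  then show ?case using conn_trans[OF _ conn_sym[OF m''(5)]] by blast
qed




definition terminal :: "mono \<Rightarrow> bool" where
  "terminal m \<longleftrightarrow> (\<forall>v\<in>Poly_Mapping.keys m. \<forall>w\<in>Poly_Mapping.keys m. \<not> snd v < fst w)"

definition ds :: "mono \<Rightarrow> nat \<Rightarrow> nat" where "ds m x = rs m x + cs m x"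

definition wt :: "mono \<Rightarrow> nat" where "wt m = L fst m"

lemma ds_add: "ds (a + b) x = ds a x + ds b x" by (simp add: ds_def rs_add cs_add)
lemma wt_add: "wt (a + b) = wt a + wt b" by (simp add: wt_def L_add)
lemma wt_e1 [simp]: "wt (Poly_Mapping.single v (Suc 0)) = fst v"
  using L_e[of fst v] by (simp add: wt_def)

lemma phaseB:
  fixes G :: "'k::comm_ring_1 mpoly set"
  assumes HS: "\<And>a b c d. (a,b) \<in> T \<Longrightarrow> (c,d) \<in> T \<Longrightarrow> b < c \<Longrightarrow>
       (a,c) \<in> T \<and> (b,d) \<in> T \<and> conn T G (e(a,b) + e(c,d)) (e(a,c) + e(b,d))"
    and Tle: "\<And>v. v \<in> T \<Longrightarrow> fst v \<le> snd v"
  shows "Poly_Mapping.keys m \<subseteq> T \<Longrightarrow> \<exists>m'. Poly_Mapping.keys m' \<subseteq> T \<and> terminal m'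
           \<and> (\<forall>x. ds m' x = ds m x) \<and> conn T G m m'"
proof (induction "wt m" arbitrary: m rule: less_induct)
  case less
  show ?case
  proof (cases "terminal m")
    case True then show ?thesis using less.prems conn_refl by blast
  next
    case False
    then obtain v w where vw: "v \<in> Poly_Mapping.keys m" "w \<in> Poly_Mapping.keys m" "snd v < fst w"
      unfolding terminal_def by blast
    obtain a b where v: "v = (a,b)" by force
    obtain c d where w: "w = (c,d)" by force
    have Tv: "(a,b) \<in> T" and Tw: "(c,d) \<in> T" using vw less.prems v w by blast+
    have bc: "b < c" using vw v w by simp
    have ab: "a \<le> b" using Tle[OF Tv] by simp
    have hs: "(a,c) \<in> T" "(b,d) \<in> T" "conn T G (e(a,b) + e(c,d)) (e(a,c) + e(b,d))"
      using HS[OF Tv Tw bc] by blast+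
    define r where "r = m - e v - e w"
    have ms: "m = r + (e (a,b) + e (c,d))"
      unfolding r_def using split_two[OF vw(1,2)] v w ab bc by force
    have keysr: "Poly_Mapping.keys r \<subseteq> T"
      using less.prems keys_minus_sub unfolding r_def by blast
    define m1 where "m1 = r + (e (a,c) + e (b,d))"
    have c1: "conn T G m m1"
      unfolding m1_def using conn_add[OF hs(3) keysr] ms by simp
    have k1: "Poly_Mapping.keys m1 \<subseteq> T"
      unfolding m1_def using keysr hs by (auto simp: keys_mono_add)
    have "wt m = wt r + (a + c)" using ms by (simp add: wt_add)
    moreover have "wt m1 = wt r + (a + b)" unfolding m1_def by (simp add: wt_add)
    ultimately have "wt m1 < wt m" using bc by simp
    then obtain m' where m': "Poly_Mapping.keys m' \<subseteq> T" "terminal m'"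
        "\<forall>x. ds m' x = ds m1 x" "conn T G m1 m'"
      using less.hyps k1 by blast
    have "\<forall>x. ds m1 x = ds m x"
    proof
      fix x
      have "ds m1 x = ds r x + (ds (e(a,c)) x + ds (e(b,d)) x)" by (simp only: m1_def ds_add)
      moreover have "ds m x = ds r x + (ds (e(a,b)) x + ds (e(c,d)) x)"
        by (subst ms) (simp only: ds_add)
      ultimately show "ds m1 x = ds m x" by (simp add: ds_def)
    qed
    then show ?thesis using m' conn_trans[OF c1 m'(4)] by auto
  qed
qed

lemma L_sum_fun: "L (\<lambda>v. \<Sum>i\<in>I. h i v) m = (\<Sum>i\<in>I. L (h i) m)"
  unfolding L_def by (simp add: sum_distrib_left sum.swap[of _ I])

lemma prefix_rs: "(\<Sum>x<s. rs m x) = L (\<lambda>v. if fst v < s then 1 else 0) m"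
proof -
  have "(\<Sum>x<s. rs m x) = L (\<lambda>v. \<Sum>x<s. if fst v = x then 1 else 0) m"
    unfolding rs_def L_sum_fun ..
  also have "\<dots> = L (\<lambda>v. if fst v < s then 1 else 0) m"
    by (rule L_cong) (simp add: sum.delta)
  finally show ?thesis .
qed

lemma prefix_ds: "(\<Sum>x<s. ds m x) = L (\<lambda>v. (if fst v < s then 1 else 0) + (if snd v < s then 1 else 0)) m"
proof -
  have "(\<Sum>x<s. cs m x) = L (\<lambda>v. \<Sum>x<s. if snd v = x then 1 else 0) m"
    unfolding cs_def L_sum_fun ..
  also have "\<dots> = L (\<lambda>v. if snd v < s then 1 else 0) m"
    by (rule L_cong) (simp add: sum.delta)
  finally have "(\<Sum>x<s. cs m x) = L (\<lambda>v. if snd v < s then 1 else 0) m" .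
  then show ?thesis unfolding ds_def sum.distrib prefix_rs L_plus_fun by simp
qed

lemma prefix_terminal:
  assumes "terminal m"
  shows "(\<Sum>x<s. rs m x) = min (deg m) (\<Sum>x<s. ds m x)"
proof (cases "\<forall>v\<in>Poly_Mapping.keys m. fst v < s")
  case True
  have "(\<Sum>x<s. rs m x) = deg m"
    unfolding prefix_rs deg_def by (rule L_cong) (use True in auto)
  moreover have "(\<Sum>x<s. rs m x) \<le> (\<Sum>x<s. ds m x)"
    by (rule sum_mono) (simp add: ds_def)
  ultimately show ?thesis by simp
next
  case False
  then obtain w where w: "w \<in> Poly_Mapping.keys m" "s \<le> fst w" by force
  have "\<forall>v\<in>Poly_Mapping.keys m. s \<le> snd v"
    using assms w unfolding terminal_def by force
  then have "(\<Sum>x<s. ds m x) = (\<Sum>x<s. rs m x)"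
    unfolding prefix_ds prefix_rs by (intro L_cong) auto
  moreover have "(\<Sum>x<s. rs m x) \<le> deg m"
    unfolding prefix_rs deg_def by (rule L_mono) auto
  ultimately show ?thesis by simp
qed

lemma deg_from_ds:
  assumes "\<forall>v\<in>Poly_Mapping.keys m. fst v < s \<and> snd v < s"
  shows "(\<Sum>x<s. ds m x) = 2 * deg m"
proof -
  have "(\<Sum>x<s. ds m x) = L (\<lambda>v. 1 + 1) m"
    unfolding prefix_ds by (rule L_cong) (use assms in auto)
  also have "\<dots> = 2 * deg m" unfolding L_plus_fun deg_def by simp
  finally show ?thesis .
qed

lemma phaseC:
  assumes t1: "terminal m1" and t2: "terminal m2" and dd: "\<forall>x. ds m1 x = ds m2 x"
  shows "rs m1 x = rs m2 x \<and> cs m1 x = cs m2 x"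
proof -
  let ?K = "Poly_Mapping.keys m1 \<union> Poly_Mapping.keys m2"
  define s where "s = Suc (\<Sum>v\<in>?K. fst v + snd v)"
  have big: "\<forall>v\<in>?K. fst v < s \<and> snd v < s"
  proof
    fix v assume "v \<in> ?K"
    then have "fst v + snd v \<le> (\<Sum>v\<in>?K. fst v + snd v)" by (intro member_le_sum) auto
    then show "fst v < s \<and> snd v < s" unfolding s_def by simp
  qed
  have "2 * deg m1 = 2 * deg m2"
    using deg_from_ds[of m1 s] deg_from_ds[of m2 s] big dd by simp
  then have dg: "deg m1 = deg m2" by simp
  have P: "\<And>t. (\<Sum>x<t. rs m1 x) = (\<Sum>x<t. rs m2 x)"
    using prefix_terminal[OF t1] prefix_terminal[OF t2] dg dd by simp
  have "rs m1 x = rs m2 x"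
    using P[of "Suc x"] P[of x] by simp
  moreover have "cs m1 x = cs m2 x" using dd[rule_format, of x] calculation by (simp add: ds_def)
  ultimately show ?thesis by simp
qed




definition psiT :: "nat \<times> nat \<Rightarrow> mono" where "psiT v = e (0, fst v) + e (1, snd v)"
definition psiS :: "nat \<times> nat \<Rightarrow> mono" where "psiS v = e (0, fst v) + e (0, snd v)"

lemma map_mult_one: "Poly_Mapping.map ((*) (Suc 0)) p = p"
  by (rule poly_mapping_eqI) (simp add: lookup_map_mult)

lemma lin_e1 [simp]: "lin f (Poly_Mapping.single v (Suc 0)) = f v"
  by (simp add: lin_def map_mult_one)

lemma lin_e: "lin f (e v) = f v"
  by simp

lemma lookup_e1 [simp]: "Poly_Mapping.lookup (Poly_Mapping.single v (Suc 0)) k = (if v = k then 1 else 0)"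
  by (simp add: lookup_single when_def)

lemma Var_mon: "Var p = (mon (e p) :: 'k::comm_ring_1 mpoly)"
  by (simp add: Var_def)

lemma mon_add: "(mon (a + b) :: 'k::comm_ring_1 mpoly) = mon a * mon b"
  by (simp add: mult_single)

lemma VV: "(Var p * Var q :: 'k::comm_ring_1 mpoly) = mon (e p + e q)"
  by (simp add: Var_mon mon_add)

lemma push_minor:
  "push (lin f) (Var p * Var q - Var r * Var s :: 'k::comm_ring_1 mpoly)
    = Poly_Mapping.single (f p + f q) 1 - Poly_Mapping.single (f r + f s) 1"
  by (simp add: VV push_diff lin_add)

lemma lookup_e_if: "Poly_Mapping.lookup (e v) k = (if v = k then 1 else 0)"
  by (simp add: lookup_single when_def)

lemma rs_lin: "Poly_Mapping.lookup (lin psiT m) (0, i) = rs m i"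
  unfolding lookup_lin rs_def by (rule L_cong) (simp add: psiT_def lookup_add lookup_e_if)

lemma cs_lin: "Poly_Mapping.lookup (lin psiT m) (1, i) = cs m i"
  unfolding lookup_lin cs_def by (rule L_cong) (simp add: psiT_def lookup_add lookup_e_if)

lemma ds_lin: "Poly_Mapping.lookup (lin psiS m) (0, i) = ds m i"
  unfolding lookup_lin ds_def rs_def cs_def L_plus_fun[symmetric]
  by (rule L_cong) (simp add: psiS_def lookup_add lookup_e_if)

locale tabl =
  fixes n :: nat and lam mu :: "nat \<Rightarrow> nat"
  assumes n1: "n \<ge> 1"
    and lampos: "\<And>i. 1 \<le> i \<Longrightarrow> i \<le> n \<Longrightarrow> lam i > 0"
    and lamdec: "\<And>i. 1 \<le> i \<Longrightarrow> i < n \<Longrightarrow> lam (i + 1) \<le> lam i"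
    and muinc: "\<And>i. 1 \<le> i \<Longrightarrow> i < n \<Longrightarrow> mu i \<le> mu (i + 1)"
    and mun: "mu n < lam n"
    and mui: "\<And>i. 1 \<le> i \<Longrightarrow> i \<le> n \<Longrightarrow> mu i \<ge> i - 1"
begin

abbreviation "T \<equiv> tab_pos n lam mu"

lemma T_iff: "(i,j) \<in> T \<longleftrightarrow> 1 \<le> i \<and> i \<le> n \<and> mu i < j \<and> j \<le> lam i"
  by (simp add: tab_pos_def)

lemma mu_mono: assumes "1 \<le> i" "i \<le> k" "k \<le> n" shows "mu i \<le> mu k"
  using assms(2,3)
proof (induction k rule: dec_induct)
  case base then show ?case by simp
next
  case (step k) then show ?case using muinc[of k] assms(1) by simp
qed

lemma lam_mono: assumes "1 \<le> i" "i \<le> k" "k \<le> n" shows "lam k \<le> lam i"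
  using assms(2,3)
proof (induction k rule: dec_induct)
  case base then show ?case by simp
next
  case (step k) then show ?case using lamdec[of k] assms(1) by simp
qed

lemma nest: "1 \<le> i \<Longrightarrow> i < k \<Longrightarrow> (k,c) \<in> T \<Longrightarrow> (i,c) \<in> T"
  unfolding T_iff using mu_mono[of i k] lam_mono[of i k] by force

lemma T1: "v \<in> T \<Longrightarrow> 1 \<le> fst v"
  by (cases v) (simp add: T_iff)

lemma Tle: "v \<in> T \<Longrightarrow> fst v \<le> snd v"
proof (cases v)
  case (Pair i j)
  assume "v \<in> T"
  then have "1 \<le> i" "i \<le> n" "mu i < j" using Pair T_iff by auto
  then show ?thesis using mui[of i] Pair by simp
qed

lemma HS_pos:
  assumes "(a,b) \<in> T" "(c,d) \<in> T" "b < c"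
  shows "(a,c) \<in> T" "(b,d) \<in> T"
proof -
  have ab: "a \<le> b" and cd: "c \<le> d" using Tle assms by force+
  have A: "1 \<le> a" "a \<le> n" "mu a < b" "b \<le> lam a" using assms T_iff by auto
  have C: "1 \<le> c" "c \<le> n" "mu c < d" "d \<le> lam c" using assms T_iff by auto
  show "(a,c) \<in> T" unfolding T_iff
    using A C ab cd assms(3) lam_mono[of a c] by auto
  show "(b,d) \<in> T" unfolding T_iff
    using A C ab cd assms(3) lam_mono[of b c] mu_mono[of b c] by auto
qed

abbreviation "S \<equiv> sym_pos n lam mu"

lemma T_S: "p \<in> T \<Longrightarrow> p \<in> S"
  by (cases p) (simp add: sym_pos_def)

lemma sym_entry_T: "p \<in> T \<Longrightarrow> sym_entry n lam mu p = Var p"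
  by (simp add: sym_entry_def)

lemma sym_entry_ex: "p \<in> S \<Longrightarrow> \<exists>q\<in>T. sym_entry n lam mu p = Var q \<and> (q = p \<or> q = (snd p, fst p))"
  by (cases p) (auto simp: sym_entry_def sym_pos_def)

lemma TS_minors: "two_minors T tab_entry \<subseteq> (two_minors S (sym_entry n lam mu) :: 'k::comm_ring_1 mpoly set)"
proof
  fix x :: "'k mpoly" assume "x \<in> two_minors T tab_entry"
  then obtain i j k l where x: "x = tab_entry (i,j) * tab_entry (k,l) - tab_entry (i,l) * tab_entry (k,j)"
     "i<k" "j<l" "(i,j)\<in>T" "(i,l)\<in>T" "(k,j)\<in>T" "(k,l)\<in>T" unfolding two_minors_def by blast
  then have "x = sym_entry n lam mu (i,j) * sym_entry n lam mu (k,l) - sym_entry n lam mu (i,l) * sym_entry n lam mu (k,j)"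
    by (simp add: sym_entry_T tab_entry_def)
  then show "x \<in> two_minors S (sym_entry n lam mu)" unfolding two_minors_def using x T_S by blast
qed

lemma minor_T:
  assumes "1 \<le> i" "i < k" "(k,c) \<in> T" "(k,c') \<in> T" "c < c'"
  shows "(mon (e(i,c) + e(k,c')) - mon (e(i,c') + e(k,c)) :: 'k::comm_ring_1 mpoly) \<in> two_minors T tab_entry"
    and "(mon (e(i,c) + e(k,c')) - mon (e(i,c') + e(k,c)) :: 'k::comm_ring_1 mpoly) \<in> two_minors S (sym_entry n lam mu)"
proof -
  have P: "(i,c) \<in> T" "(i,c') \<in> T" using nest assms by blast+
  have eq: "(mon (e(i,c) + e(k,c')) - mon (e(i,c') + e(k,c)) :: 'k mpoly)
      = Var (i,c) * Var (k,c') - Var (i,c') * Var (k,c)" by (simp add: VV)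
  show "(mon (e(i,c) + e(k,c')) - mon (e(i,c') + e(k,c)) :: 'k::comm_ring_1 mpoly) \<in> two_minors T tab_entry"
    unfolding eq two_minors_def tab_entry_def using P assms by blast
  then show "(mon (e(i,c) + e(k,c')) - mon (e(i,c') + e(k,c)) :: 'k::comm_ring_1 mpoly) \<in> two_minors S (sym_entry n lam mu)"
    using TS_minors by blast
qed

lemma minor_S:
  assumes "(a,b) \<in> T" "(c,d) \<in> T" "b < c"
  shows "(mon (e(a,b) + e(c,d)) - mon (e(a,c) + e(b,d)) :: 'k::comm_ring_1 mpoly) \<in> two_minors S (sym_entry n lam mu)"
proof -
  have ab: "a \<le> b" and cd: "c \<le> d" using Tle assms by force+
  have P: "(a,c) \<in> T" "(b,d) \<in> T" using HS_pos assms by blast+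
  have s1: "sym_entry n lam mu (d,c) = (Var (c,d) :: 'k mpoly)"
    using Tle[of "(d,c)"] cd by (cases "c = d") (auto simp: sym_entry_def)
  have s2: "sym_entry n lam mu (d,b) = (Var (b,d) :: 'k mpoly)"
    using Tle[of "(d,b)"] ab cd assms(3) by (auto simp: sym_entry_def)
  have eq: "(mon (e(a,b) + e(c,d)) - mon (e(a,c) + e(b,d)) :: 'k mpoly)
      = sym_entry n lam mu (a,b) * sym_entry n lam mu (d,c) - sym_entry n lam mu (a,c) * sym_entry n lam mu (d,b)"
    unfolding s1 s2 sym_entry_T[OF assms(1)] sym_entry_T[OF P(1)] by (simp add: VV)
  have "(a,b) \<in> S" "(a,c) \<in> S" "(d,c) \<in> S" "(d,b) \<in> S"
    using assms P T_S by (auto simp: sym_pos_def)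
  moreover have "a < d" "b < c" using ab cd assms(3) by auto
  ultimately show ?thesis unfolding eq two_minors_def
    by (intro CollectI exI[of _ a] exI[of _ b] exI[of _ d] exI[of _ c]) simp
qed

end




context tabl begin

lemma Var_pr: "p \<in> T \<Longrightarrow> (Var p :: 'k::comm_ring_1 mpoly) \<in> poly_ring T"
  unfolding Var_def by (rule pr_single) simp

lemma sym_entry_psi: "p \<in> S \<Longrightarrow> \<exists>q\<in>T. sym_entry n lam mu p = Var q \<and> psiS q = psiS p"
  using sym_entry_ex[of p] by (auto simp: psiS_def add.commute)

lemma GT_sub: "(two_minors T tab_entry :: 'k::comm_ring_1 mpoly set) \<subseteq> poly_ring T"
  unfolding two_minors_def tab_entry_def by (auto intro!: pr_diff pr_mult Var_pr)

lemma GT_push: "(g :: 'k::comm_ring_1 mpoly) \<in> two_minors T tab_entry \<Longrightarrow> push (lin psiT) g = 0"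
  unfolding two_minors_def tab_entry_def by (auto simp: push_minor psiT_def ac_simps)

lemma GS_elem:
  assumes "(g :: 'k::comm_ring_1 mpoly) \<in> two_minors S (sym_entry n lam mu)"
  shows "g \<in> poly_ring T \<and> push (lin psiS) g = 0"
proof -
  obtain i j k l where x: "g = sym_entry n lam mu (i,j) * sym_entry n lam mu (k,l) - sym_entry n lam mu (i,l) * sym_entry n lam mu (k,j)"
     "(i,j)\<in>S" "(i,l)\<in>S" "(k,j)\<in>S" "(k,l)\<in>S" using assms unfolding two_minors_def by blast
  obtain q1 where q1: "q1 \<in> T" "(sym_entry n lam mu (i,j) :: 'k mpoly) = Var q1" "psiS q1 = psiS (i,j)" using sym_entry_psi x by blast
  obtain q2 where q2: "q2 \<in> T" "(sym_entry n lam mu (k,l) :: 'k mpoly) = Var q2" "psiS q2 = psiS (k,l)" using sym_entry_psi x by blast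
  obtain q3 where q3: "q3 \<in> T" "(sym_entry n lam mu (i,l) :: 'k mpoly) = Var q3" "psiS q3 = psiS (i,l)" using sym_entry_psi x by blast
  obtain q4 where q4: "q4 \<in> T" "(sym_entry n lam mu (k,j) :: 'k mpoly) = Var q4" "psiS q4 = psiS (k,j)" using sym_entry_psi x by blast
  have g: "g = Var q1 * Var q2 - Var q3 * Var q4" using x q1 q2 q3 q4 by simp
  have "g \<in> poly_ring T" unfolding g using q1 q2 q3 q4 by (intro pr_diff pr_mult Var_pr)
  moreover have "push (lin psiS) g = 0"
    unfolding g push_minor q1(3) q2(3) q3(3) q4(3) by (simp add: psiS_def ac_simps)
  ultimately show ?thesis by simp
qed

lemma connT:
  assumes "Poly_Mapping.keys m \<subseteq> T" "Poly_Mapping.keys m' \<subseteq> T" "lin psiT m = lin psiT m'"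
  shows "(mon m - mon m' :: 'k::comm_ring_1 mpoly) \<in> ideal_gen (poly_ring T) (two_minors T tab_entry)"
proof -
  have r: "\<forall>i. rs m i = rs m' i" using assms(3) rs_lin by metis
  have c: "\<forall>i. cs m i = cs m' i" using assms(3) cs_lin by metis
  let ?G = "two_minors T tab_entry :: 'k mpoly set"
  have H: "\<And>i k c c'. 1 \<le> i \<Longrightarrow> i < k \<Longrightarrow> (k,c) \<in> T \<Longrightarrow> (k,c') \<in> T \<Longrightarrow> c < c' \<Longrightarrow>
           conn T ?G (e(i,c) + e(k,c')) (e(i,c') + e(k,c))"
    using minor_T(1) conn_gen by blast
  have "conn T ?G m m'"
    apply (rule phaseA[where T=T and G="?G"])
    apply (fact nest) apply (fact T1) apply (fact H) apply (rule refl)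
    apply (fact assms(1)) apply (fact assms(2)) apply (fact r) apply (fact c) done
  then show ?thesis unfolding conn_def .
qed

lemma connS:
  assumes "Poly_Mapping.keys m \<subseteq> T" "Poly_Mapping.keys m' \<subseteq> T" "lin psiS m = lin psiS m'"
  shows "(mon m - mon m' :: 'k::comm_ring_1 mpoly) \<in> ideal_gen (poly_ring T) (two_minors S (sym_entry n lam mu))"
proof -
  let ?G = "two_minors S (sym_entry n lam mu) :: 'k mpoly set"
  have d: "\<forall>i. ds m i = ds m' i" using assms(3) ds_lin by metis
  have HS: "\<And>a b c d. (a,b) \<in> T \<Longrightarrow> (c,d) \<in> T \<Longrightarrow> b < c \<Longrightarrow>
       (a,c) \<in> T \<and> (b,d) \<in> T \<and> conn T ?G (e(a,b) + e(c,d)) (e(a,c) + e(b,d))"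
    using HS_pos minor_S conn_gen by blast
  obtain m1 where m1: "Poly_Mapping.keys m1 \<subseteq> T" "terminal m1" "\<forall>x. ds m1 x = ds m x" "conn T ?G m m1"
    using phaseB[where T=T and G="?G", OF HS Tle assms(1)] by blast
  obtain m2 where m2: "Poly_Mapping.keys m2 \<subseteq> T" "terminal m2" "\<forall>x. ds m2 x = ds m' x" "conn T ?G m' m2"
    using phaseB[where T=T and G="?G", OF HS Tle assms(2)] by blast
  have dd: "\<forall>x. ds m1 x = ds m2 x" using m1(3) m2(3) d by simp
  have r: "\<forall>i. rs m1 i = rs m2 i" and c: "\<forall>i. cs m1 i = cs m2 i"
    using phaseC[OF m1(2) m2(2) dd] by auto
  have H: "\<And>i k c c'. 1 \<le> i \<Longrightarrow> i < k \<Longrightarrow> (k,c) \<in> T \<Longrightarrow> (k,c') \<in> T \<Longrightarrow> c < c' \<Longrightarrow>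
           conn T ?G (e(i,c) + e(k,c')) (e(i,c') + e(k,c))"
    using minor_T(2) conn_gen by blast
  have "conn T ?G m1 m2"
    apply (rule phaseA[where T=T and G="?G"])
    apply (fact nest) apply (fact T1) apply (fact H) apply (rule refl)
    apply (fact m1(1)) apply (fact m2(1)) apply (fact r) apply (fact c) done
  then have "conn T ?G m m'" using conn_trans[OF m1(4) conn_trans[OF _ conn_sym[OF m2(4)]]] by blast
  then show ?thesis unfolding conn_def .
qed

lemma mainT: "prime_ideal_in (poly_ring T :: 'k::field mpoly set) (ideal_gen (poly_ring T) (two_minors T tab_entry))"
proof -
  have "ideal_gen (poly_ring T) (two_minors T tab_entry) = {f \<in> poly_ring T. push (lin psiT) f = (0 :: 'k mpoly)}"
    by (rule kernel_char[where \<psi>="lin psiT", OF lin_add GT_sub GT_push connT])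
  then show ?thesis using kernel_prime[where \<psi>="lin psiT" and V=T, OF lin_add] by simp
qed

lemma mainS: "prime_ideal_in (poly_ring T :: 'k::field mpoly set) (ideal_gen (poly_ring T) (two_minors S (sym_entry n lam mu)))"
proof -
  have "ideal_gen (poly_ring T) (two_minors S (sym_entry n lam mu)) = {f \<in> poly_ring T. push (lin psiS) f = (0 :: 'k mpoly)}"
    by (rule kernel_char[where \<psi>="lin psiS", OF lin_add _ _ connS]) (use GS_elem in auto)
  then show ?thesis using kernel_prime[where \<psi>="lin psiS" and V=T, OF lin_add] by simp
qed

end

theorem proposition3p5:
  fixes n :: nat and lam mu :: "nat \<Rightarrow> nat" and m :: nat
  assumes "n \<ge> 1"
    and "m = lam 1"
    and "\<And>i. 1 \<le> i \<Longrightarrow> i \<le> n \<Longrightarrow> lam i > 0"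
    and "\<And>i. 1 \<le> i \<Longrightarrow> i < n \<Longrightarrow> lam (i + 1) \<le> lam i"
    and "\<And>i. 1 \<le> i \<Longrightarrow> i < n \<Longrightarrow> mu i \<le> mu (i + 1)"
    and "mu n < lam n"
    and "\<And>i. 1 \<le> i \<Longrightarrow> i \<le> n \<Longrightarrow> mu i \<ge> i - 1"
  shows "prime_ideal_in (poly_ring (tab_pos n lam mu) :: 'k::field mpoly set)
           (ideal_gen (poly_ring (tab_pos n lam mu))
              (two_minors (tab_pos n lam mu) tab_entry))
       \<and> prime_ideal_in (poly_ring (tab_pos n lam mu) :: 'k::field mpoly set)
           (ideal_gen (poly_ring (tab_pos n lam mu))
              (two_minors (sym_pos n lam mu) (sym_entry n lam mu)))"
proof -
  interpret tabl n lam mu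
    using assms by unfold_locales auto
  show ?thesis using mainT mainS by blast
qed



end
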